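(* Let $n>k\geq 1$ and $r=n-k$. There exists an $(n,k,\ell)$ MDS array code with $\ell=\mathrm{lcm}(1,2,\ldots,r)\cdot r^n$ that satisfies the $(h,d)$-optimal repair property simultaneously for all integer pairs $(h,d)$ with $1\leq h\leq n-k$, $k\leq d\leq n-h$ and $h\mid(d-k)$.
   Context: An $(n,k,\ell)$ MDS array code over a finite field $F$ is an $F$-linear set of vectors $(\bm c_1,\ldots,\bm c_n)$, $\bm c_i\in F^\ell$ (node $i$ stores $\bm c_i$), of dimension $k\ell$, such that any $k$ coordinates $\bm c_i$ determine the codeword. For $1\leq h\leq n-k$, $k\leq d\leq n-h$, the $(h,d)$-optimal repair property means: for every $h$-subset $\mathcal{H}\subseteq[n]$ of failed nodes and every $d$-subset $\mathcal{R}\subseteq[n]\setminus\mathcal{H}$ of helper nodes, each helper $j\in\mathcal{R}$ can send $\beta=\frac{h\ell}{d-k+h}$ symbols of $F$ computed from $\bm c_j$ such that from these $\frac{dh\ell}{d-k+h}$ symbols in total all $\bm c_i$, $i\in\mathcal{H}$, are determined, for every codeword (equality in the cut-set bound). *)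

theory Defs
  imports "HOL-Algebra.Ring" "HOL-Algebra.Ring_Divisibility"
begin

text \<open>A finite field is represented as a HOL-Algebra field structure whose
carrier is a set of natural numbers (every finite field is isomorphic to such a one).
Nodes are indexed by 0..n-1, node contents by 0..l-1.  An array word is a function
c with c i j the j-th symbol stored at node i; outside the index range it is zero.\<close>

definition arr_space :: "nat ring \<Rightarrow> nat \<Rightarrow> nat \<Rightarrow> (nat \<Rightarrow> nat \<Rightarrow> nat) set" where
  "arr_space F n l = {c. \<forall>i j. (i < n \<and> j < l \<longrightarrow> c i j \<in> carrier F) \<and>
                              (\<not> (i < n \<and> j < l) \<longrightarrow> c i j = \<zero>\<^bsub>F\<^esub>)}"

definition linear_array_code :: "nat ring \<Rightarrow> nat \<Rightarrow> nat \<Rightarrow> (nat \<Rightarrow> nat \<Rightarrow> nat) set \<Rightarrow> bool" where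
  "linear_array_code F n l C \<longleftrightarrow>
     C \<subseteq> arr_space F n l \<and> C \<noteq> {} \<and>
     (\<forall>c\<in>C. \<forall>c'\<in>C. (\<lambda>i j. c i j \<oplus>\<^bsub>F\<^esub> c' i j) \<in> C) \<and>
     (\<forall>a\<in>carrier F. \<forall>c\<in>C. (\<lambda>i j. a \<otimes>\<^bsub>F\<^esub> c i j) \<in> C)"

text \<open>(n,k,l) MDS array code: F-linear, of dimension k*l (over the finite field F
this means it has |F|^(k l) elements), and any k nodes determine the codeword.\<close>
definition mds_array_code :: "nat ring \<Rightarrow> nat \<Rightarrow> nat \<Rightarrow> nat \<Rightarrow> (nat \<Rightarrow> nat \<Rightarrow> nat) set \<Rightarrow> bool" where
  "mds_array_code F n k l C \<longleftrightarrow>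
     linear_array_code F n l C \<and>
     card C = card (carrier F) ^ (k * l) \<and>
     (\<forall>K. K \<subseteq> {..<n} \<and> card K = k \<longrightarrow>
        (\<forall>c\<in>C. \<forall>c'\<in>C. (\<forall>i\<in>K. c i = c' i) \<longrightarrow> c = c'))"

text \<open>(h,d)-optimal repair: for every set H of h failed nodes and every set R of d
helper nodes disjoint from H, every helper j sends beta = h l/(d-k+h) symbols of F
computed (by an arbitrary function) from its content c j, and these symbols determine
the contents of all failed nodes, for every codeword.\<close>
definition optimal_repair :: "nat ring \<Rightarrow> nat \<Rightarrow> nat \<Rightarrow> nat \<Rightarrow> (nat \<Rightarrow> nat \<Rightarrow> nat) set \<Rightarrow> nat \<Rightarrow> nat \<Rightarrow> bool" where
  "optimal_repair F n k l C h d \<longleftrightarrow>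
     (\<forall>H R. H \<subseteq> {..<n} \<and> card H = h \<and> R \<subseteq> {..<n} - H \<and> card R = d \<longrightarrow>
       (\<exists>f :: nat \<Rightarrow> (nat \<Rightarrow> nat) \<Rightarrow> nat \<Rightarrow> nat.
          (\<forall>j\<in>R. \<forall>c\<in>C. \<forall>t < (h * l) div (d - k + h). f j (c j) t \<in> carrier F) \<and>
          (\<forall>c\<in>C. \<forall>c'\<in>C.
             (\<forall>j\<in>R. \<forall>t < (h * l) div (d - k + h). f j (c j) t = f j (c' j) t) \<longrightarrow>
             (\<forall>i\<in>H. c i = c' i))))"

end

theory Submission
  imports Defs "HOL-Computational_Algebra.Primes" "HOL-Number_Theory.Cong"
begin

definition Fp :: "nat \<Rightarrow> nat ring" where
  "Fp p = \<lparr>carrier = {..<p}, monoid.mult = (\<lambda>x y. x * y mod p), one = 1,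
           zero = 0, add = (\<lambda>x y. (x + y) mod p)\<rparr>"

lemma Fp_simps[simp]:
  "carrier (Fp p) = {..<p}" "mult (Fp p) x y = x * y mod p" "one (Fp p) = 1"
  "zero (Fp p) = 0" "add (Fp p) x y = (x + y) mod p"
  by (simp_all add: Fp_def)

lemma Fp_field:
  assumes p: "prime p"
  shows "field (Fp p)"
proof -
  have p1: "p > 1" using p prime_gt_1_nat by blast
  have ag: "abelian_group (Fp p)"
  proof (rule abelian_groupI)
    fix x assume "x \<in> carrier (Fp p)"
    then have x: "x < p" by simp
    show "\<exists>y\<in>carrier (Fp p). y \<oplus>\<^bsub>Fp p\<^esub> x = \<zero>\<^bsub>Fp p\<^esub>"
    proof (cases "x = 0")
      case True then show ?thesis using p1 by (intro bexI[of _ 0]) auto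
    next
      case False then show ?thesis using x by (intro bexI[of _ "p - x"]) auto
    qed
  qed (use p1 in \<open>auto simp add: mod_add_left_eq mod_add_right_eq add_ac\<close>)
  have cm: "comm_monoid (Fp p)"
    by (rule comm_monoidI) (use p1 in \<open>auto simp add: mod_mult_left_eq mod_mult_right_eq mult_ac\<close>)
  have cr: "cring (Fp p)"
    by (rule cringI[OF ag cm]) (simp add: mod_mult_left_eq mod_add_left_eq mod_add_right_eq
        mod_mult_right_eq distrib_right)
  show ?thesis
  proof (rule cring.field_intro2[OF cr])
    show "\<zero>\<^bsub>Fp p\<^esub> \<noteq> \<one>\<^bsub>Fp p\<^esub>" by simp
    fix x assume x: "x \<in> carrier (Fp p) - {\<zero>\<^bsub>Fp p\<^esub>}"
    then have x0: "0 < x" "x < p" by auto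
    have "coprime x p"
      using x0 p by (metis coprime_commute nat_dvd_not_less prime_imp_coprime_nat)
    then obtain y where y: "[x * y = 1] (mod p)" using cong_solve_coprime_nat by (metis One_nat_def)
    have "x * (y mod p) mod p = 1"
      using y p1 by (simp add: cong_def mod_mult_right_eq)
    moreover have "y mod p < p" using p1 by simp
    ultimately show "x \<in> Units (Fp p)"
      using x0 by (auto simp: Units_def mult.commute intro!: bexI[of _ "y mod p"])
  qed
qed

lemma vand_unique:
  fixes p :: int and mu :: "'a \<Rightarrow> int"
  assumes p: "prime p" and fin: "finite P"
  shows "\<And>r z. card P \<le> r \<Longrightarrow> (\<forall>q\<in>P. \<forall>q'\<in>P. p dvd (mu q - mu q') \<longrightarrow> q = q') \<Longrightarrow>
     (\<forall>t<r. p dvd (\<Sum>q\<in>P. mu q ^ t * z q)) \<Longrightarrow> \<forall>q\<in>P. p dvd z q"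
  using fin
proof (induction P rule: finite_induct)
  case empty then show ?case by simp
next
  case (insert m P r z)
  from insert.prems(1) insert.hyps obtain r' where r: "r = Suc r'" and cr: "card P \<le> r'"
    by (cases r) auto
  define z' where "z' q = (mu q - mu m) * z q" for q
  have h1: "\<forall>t<r'. p dvd (\<Sum>q\<in>P. mu q ^ t * z' q)"
  proof (intro allI impI)
    fix t assume t: "t < r'"
    have a: "p dvd (\<Sum>q\<in>insert m P. mu q ^ Suc t * z q)" using insert.prems(3) t r by auto
    have b: "p dvd (\<Sum>q\<in>insert m P. mu q ^ t * z q)" using insert.prems(3) t r by auto
    have "(\<Sum>q\<in>P. mu q ^ t * z' q) =
          (\<Sum>q\<in>insert m P. mu q ^ Suc t * z q) - mu m * (\<Sum>q\<in>insert m P. mu q ^ t * z q)"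
      using insert.hyps
      by (simp add: z'_def sum_distrib_left sum_subtractf[symmetric] algebra_simps)
    then show "p dvd (\<Sum>q\<in>P. mu q ^ t * z' q)" using a b by simp
  qed
  have inj: "\<forall>q\<in>P. \<forall>q'\<in>P. p dvd (mu q - mu q') \<longrightarrow> q = q'" using insert.prems(2) by blast
  have IH: "\<forall>q\<in>P. p dvd z' q" using insert.IH[OF cr inj h1] .
  have zP: "\<forall>q\<in>P. p dvd z q"
  proof
    fix q assume q: "q \<in> P"
    have "\<not> p dvd (mu q - mu m)" using insert.prems(2) q insert.hyps by auto
    moreover have "p dvd (mu q - mu m) * z q" using IH q by (simp add: z'_def)
    ultimately show "p dvd z q" using p prime_dvd_mult_iff by blast
  qed
  have "p dvd (\<Sum>q\<in>insert m P. mu q ^ 0 * z q)" using insert.prems(3) r by auto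
  then have "p dvd (z m + (\<Sum>q\<in>P. z q))" using insert.hyps by simp
  moreover have "p dvd (\<Sum>q\<in>P. z q)" using zP by (simp add: dvd_sum)
  ultimately have "p dvd z m" using dvd_add_left_iff by blast
  then show ?case using zP by simp
qed

lemma dvd_diff_small:
  fixes a b p :: nat
  assumes "a < p" "b < p" "int p dvd (int a - int b)"
  shows "a = b"
proof -
  have "int a mod int p = int b mod int p" using assms(3) by (simp add: mod_eq_dvd_iff)
  then have "int (a mod p) = int (b mod p)" by (simp add: of_nat_mod)
  then show ?thesis using assms(1,2) by simp
qed

lemma vand_exists:
  fixes p :: nat and mu :: "'a \<Rightarrow> int" and b :: "nat \<Rightarrow> int"
  assumes p: "prime p" and fin: "finite Q" and cQ: "card Q = r"
    and inj: "\<forall>q\<in>Q. \<forall>q'\<in>Q. int p dvd (mu q - mu q') \<longrightarrow> q = q'"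
  shows "\<exists>z. (\<forall>q\<in>Q. z q < p) \<and> (\<forall>t<r. int p dvd (b t + (\<Sum>q\<in>Q. mu q ^ t * int (z q))))"
proof -
  have p0: "p > 0" using p prime_gt_0_nat by blast
  have pi: "prime (int p)" using p by simp
  define S where "S z t = b t + (\<Sum>q\<in>Q. mu q ^ t * int (z q))" for z t
  define Phi where "Phi z = restrict (\<lambda>t. nat (S z t mod int p)) {..<r}" for z
  define A where "A = Q \<rightarrow>\<^sub>E {..<p}"
  define B where "B = ({..<r}::nat set) \<rightarrow>\<^sub>E {..<p}"
  have sub: "Phi ` A \<subseteq> B"
    using p0 by (auto simp: Phi_def B_def nat_less_iff split: if_splits)
  have injPhi: "inj_on Phi A"
  proof (rule inj_onI)
    fix z z' assume z: "z \<in> A" and z': "z' \<in> A" and e: "Phi z = Phi z'"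
    have "\<forall>t<r. int p dvd (\<Sum>q\<in>Q. mu q ^ t * (int (z q) - int (z' q)))"
    proof (intro allI impI)
      fix t assume t: "t < r"
      have "nat (S z t mod int p) = nat (S z' t mod int p)"
        using fun_cong[OF e, of t] t by (simp add: Phi_def)
      then have "S z t mod int p = S z' t mod int p" using p0 by (subst (asm) eq_nat_nat_iff) auto
      then have "int p dvd (S z t - S z' t)" by (simp add: mod_eq_dvd_iff)
      moreover have "S z t - S z' t = (\<Sum>q\<in>Q. mu q ^ t * (int (z q) - int (z' q)))"
        by (simp add: S_def sum_subtractf[symmetric] algebra_simps)
      ultimately show "int p dvd (\<Sum>q\<in>Q. mu q ^ t * (int (z q) - int (z' q)))" by simp
    qed
    then have d: "\<forall>q\<in>Q. int p dvd (int (z q) - int (z' q))"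
      using vand_unique[OF pi fin, of r mu "\<lambda>q. int (z q) - int (z' q)"] cQ inj by simp
    show "z = z'"
    proof (rule PiE_ext[OF z[unfolded A_def] z'[unfolded A_def]])
      fix q assume q: "q \<in> Q"
      have "z q < p" "z' q < p" using z z' q by (auto simp: A_def)
      moreover have "int p dvd (int (z q) - int (z' q))" using d q by blast
      ultimately show "z q = z' q"
        by (rule dvd_diff_small)
    qed
  qed
  have cA: "card A = p ^ r" using fin cQ by (simp add: A_def card_PiE prod_constant)
  have cB: "card B = p ^ r" by (simp add: B_def card_PiE prod_constant)
  have fB: "finite B" by (simp add: B_def finite_PiE)
  have "Phi ` A = B"
    using card_subset_eq[OF fB sub] card_image[OF injPhi] cA cB by simp
  moreover have "restrict (\<lambda>t. 0) {..<r} \<in> B" using p0 by (simp add: B_def)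
  ultimately obtain z where z: "z \<in> A" "Phi z = restrict (\<lambda>t. 0) {..<r}" by force
  show ?thesis
  proof (intro exI conjI)
    show "\<forall>q\<in>Q. z q < p" using z(1) by (auto simp: A_def)
    show "\<forall>t<r. int p dvd (b t + (\<Sum>q\<in>Q. mu q ^ t * int (z q)))"
    proof (intro allI impI)
      fix t assume t: "t < r"
      have "nat (S z t mod int p) = 0" using fun_cong[OF z(2), of t] t by (simp add: Phi_def)
      then have "S z t mod int p = 0" using p0
        by (subst (asm) nat_0_iff) (meson antisym pos_mod_sign of_nat_0_less_iff)
      then show "int p dvd (b t + (\<Sum>q\<in>Q. mu q ^ t * int (z q)))" by (simp add: S_def dvd_eq_mod_eq_0)
    qed
  qed
qed

definition dig :: "nat \<Rightarrow> nat \<Rightarrow> nat \<Rightarrow> nat" where "dig r i x = x div r ^ i mod r"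
definition lam :: "nat \<Rightarrow> nat \<Rightarrow> nat \<Rightarrow> nat" where "lam r i x = i * r + dig r i x"

definition Code :: "nat \<Rightarrow> nat \<Rightarrow> nat \<Rightarrow> nat \<Rightarrow> (nat \<Rightarrow> nat \<Rightarrow> nat) set" where
  "Code p n r l = {c \<in> arr_space (Fp p) n l. \<forall>x<l. \<forall>t<r.
      int p dvd (\<Sum>i<n. int (lam r i x) ^ t * int (c i x))}"

lemma dig_less: "r > 0 \<Longrightarrow> dig r i x < r" by (simp add: dig_def)

lemma lam_less: "r > 0 \<Longrightarrow> i < n \<Longrightarrow> lam r i x < n * r"
proof -
  assume r: "r > 0" and i: "i < n"
  have "lam r i x < i * r + r" using dig_less[OF r] by (simp add: lam_def)
  also have "\<dots> = (i + 1) * r" by simp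
  also have "\<dots> \<le> n * r" using i by (intro mult_right_mono) auto
  finally show ?thesis .
qed

lemma lam_eq: "r > 0 \<Longrightarrow> lam r i x = lam r j y \<Longrightarrow> i = j \<and> dig r i x = dig r j y"
proof -
  assume r: "r > 0" and e: "lam r i x = lam r j y"
  have "lam r i x div r = i" "lam r j y div r = j" using r dig_less[OF r]
    by (simp_all add: lam_def)
  then have "i = j" using e by simp
  then show ?thesis using e by (simp add: lam_def)
qed

lemma lam_dvd:
  assumes "r > 0" "i < n" "j < n" "n * r \<le> p" "int p dvd (int (lam r i x) - int (lam r j y))"
  shows "i = j \<and> dig r i x = dig r j y"
proof -
  have a: "lam r i x < p" using lam_less[OF assms(1,2), of x] assms(4) by linarith
  have b: "lam r j y < p" using lam_less[OF assms(1,3), of y] assms(4) by linarith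
  have "lam r i x = lam r j y" by (rule dvd_diff_small[OF a b assms(5)])
  then show ?thesis using lam_eq assms(1) by blast
qed

lemma dvd_mod_diff: "int p dvd (int (X mod p) - int X)"
proof -
  have "int p dvd (int X - int X mod int p)" by (rule dvd_minus_mod)
  then show ?thesis by (simp add: of_nat_mod dvd_diff_commute)
qed

lemma arr_zero: "c \<in> arr_space (Fp p) n l \<Longrightarrow> \<not> (i < n \<and> x < l) \<Longrightarrow> c i x = 0"
  by (simp add: arr_space_def)

lemma arr_less: "c \<in> arr_space (Fp p) n l \<Longrightarrow> i < n \<Longrightarrow> x < l \<Longrightarrow> c i x < p"
  by (simp add: arr_space_def)

lemma code_linear:
  assumes p: "prime p"
  shows "linear_array_code (Fp p) n l (Code p n r l)"
proof -
  have p0: "p > 0" using p prime_gt_0_nat by blast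
  have z: "(\<lambda>i j. 0) \<in> Code p n r l" using p0 by (simp add: Code_def arr_space_def)
  have add: "(\<lambda>i j. (c i j + c' i j) mod p) \<in> Code p n r l"
    if c: "c \<in> Code p n r l" and c': "c' \<in> Code p n r l" for c c'
  proof -
    have "\<forall>x<l. \<forall>t<r. int p dvd (\<Sum>i<n. int (lam r i x) ^ t * int ((c i x + c' i x) mod p))"
    proof (intro allI impI)
      fix x t assume x: "x < l" and t: "t < r"
      have a: "int p dvd (\<Sum>i<n. int (lam r i x) ^ t * int (c i x))"
       and b: "int p dvd (\<Sum>i<n. int (lam r i x) ^ t * int (c' i x))"
        using c c' x t by (auto simp: Code_def)
      have d: "int p dvd (\<Sum>i<n. int (lam r i x) ^ t * (int ((c i x + c' i x) mod p) - int (c i x) - int (c' i x)))"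
      proof (rule dvd_sum)
        fix i
        have "int p dvd (int ((c i x + c' i x) mod p) - (int (c i x) + int (c' i x)))"
          using dvd_mod_diff[of p "c i x + c' i x"] by simp
        then show "int p dvd int (lam r i x) ^ t * (int ((c i x + c' i x) mod p) - int (c i x) - int (c' i x))"
          by (metis dvd_mult diff_diff_eq)
      qed
      have "(\<Sum>i<n. int (lam r i x) ^ t * int ((c i x + c' i x) mod p)) =
         (\<Sum>i<n. int (lam r i x) ^ t * (int ((c i x + c' i x) mod p) - int (c i x) - int (c' i x)))
         + (\<Sum>i<n. int (lam r i x) ^ t * int (c i x)) + (\<Sum>i<n. int (lam r i x) ^ t * int (c' i x))"
        unfolding sum.distrib[symmetric] by (rule sum.cong) (simp_all add: algebra_simps)
      then show "int p dvd (\<Sum>i<n. int (lam r i x) ^ t * int ((c i x + c' i x) mod p))"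
        using a b d by simp
    qed
    moreover have "(\<lambda>i j. (c i j + c' i j) mod p) \<in> arr_space (Fp p) n l"
      using c c' p0 by (auto simp: Code_def arr_space_def)
    ultimately show ?thesis by (simp add: Code_def)
  qed
  have smul: "(\<lambda>i j. a * c i j mod p) \<in> Code p n r l"
    if c: "c \<in> Code p n r l" for c a
  proof -
    have "\<forall>x<l. \<forall>t<r. int p dvd (\<Sum>i<n. int (lam r i x) ^ t * int (a * c i x mod p))"
    proof (intro allI impI)
      fix x t assume x: "x < l" and t: "t < r"
      have a: "int p dvd (\<Sum>i<n. int (lam r i x) ^ t * int (c i x))"
        using c x t by (auto simp: Code_def)
      have d: "int p dvd (\<Sum>i<n. int (lam r i x) ^ t * (int (a * c i x mod p) - int a * int (c i x)))"
      proof (rule dvd_sum)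
        fix i
        have "int p dvd (int (a * c i x mod p) - int a * int (c i x))"
          using dvd_mod_diff[of p "a * c i x"] by simp
        then show "int p dvd int (lam r i x) ^ t * (int (a * c i x mod p) - int a * int (c i x))"
          by (rule dvd_mult)
      qed
      have "(\<Sum>i<n. int (lam r i x) ^ t * int (a * c i x mod p)) =
         (\<Sum>i<n. int (lam r i x) ^ t * (int (a * c i x mod p) - int a * int (c i x)))
         + int a * (\<Sum>i<n. int (lam r i x) ^ t * int (c i x))"
        unfolding sum_distrib_left sum.distrib[symmetric] by (rule sum.cong) (simp_all add: algebra_simps)
      then show "int p dvd (\<Sum>i<n. int (lam r i x) ^ t * int (a * c i x mod p))"
        using a d by simp
    qed
    moreover have "(\<lambda>i j. a * c i j mod p) \<in> arr_space (Fp p) n l"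
      using c p0 by (auto simp: Code_def arr_space_def)
    ultimately show ?thesis by (simp add: Code_def)
  qed
  show ?thesis unfolding linear_array_code_def
    using z add smul by (auto simp: Code_def)
qed

lemma code_dvd_diff:
  assumes c: "c \<in> Code p n r l" and c': "c' \<in> Code p n r l" and x: "x < l" and t: "t < r"
  shows "int p dvd (\<Sum>i<n. int (lam r i x) ^ t * (int (c i x) - int (c' i x)))"
proof -
  have a: "int p dvd (\<Sum>i<n. int (lam r i x) ^ t * int (c i x))"
   and b: "int p dvd (\<Sum>i<n. int (lam r i x) ^ t * int (c' i x))"
    using c c' x t by (auto simp: Code_def)
  have "(\<Sum>i<n. int (lam r i x) ^ t * (int (c i x) - int (c' i x))) =
        (\<Sum>i<n. int (lam r i x) ^ t * int (c i x)) - (\<Sum>i<n. int (lam r i x) ^ t * int (c' i x))"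
    unfolding sum_subtractf[symmetric] by (rule sum.cong) (simp_all add: right_diff_distrib)
  then show ?thesis using a b by simp
qed

lemma code_mds:
  assumes p: "prime p" and r: "r > 0" "n * r \<le> p" "r = n - k" "k \<le> n"
    and K: "K \<subseteq> {..<n}" "card K = k"
    and c: "c \<in> Code p n r l" and c': "c' \<in> Code p n r l" and eq: "\<forall>i\<in>K. c i = c' i"
  shows "c = c'"
proof (intro ext)
  fix i x
  show "c i x = c' i x"
  proof (cases "i < n \<and> x < l")
    case False
    have "c \<in> arr_space (Fp p) n l" "c' \<in> arr_space (Fp p) n l" using c c' by (auto simp: Code_def)
    then show ?thesis using arr_zero[of _ p n l i x] False by metis
  next
    case True
    show ?thesis
    proof (cases "i \<in> K")
      case True then show ?thesis using eq by simp
    next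
      case iK: False
      define P where "P = {..<n} - K"
      have fP: "finite P" by (simp add: P_def)
      have cP: "card P = r" proof -
        have "finite K" using K(1) finite_subset by blast
        then show ?thesis using K r by (simp add: P_def card_Diff_subset)
      qed
      have pi: "prime (int p)" using p by simp
      have inj: "\<forall>q\<in>P. \<forall>q'\<in>P. int p dvd (int (lam r q x) - int (lam r q' x)) \<longrightarrow> q = q'"
        using lam_dvd[OF r(1) _ _ r(2)] by (auto simp: P_def)
      have S: "\<forall>t<r. int p dvd (\<Sum>q\<in>P. int (lam r q x) ^ t * (int (c q x) - int (c' q x)))"
      proof (intro allI impI)
        fix t assume t: "t < r"
        have "(\<Sum>q<n. int (lam r q x) ^ t * (int (c q x) - int (c' q x))) =
              (\<Sum>q\<in>P. int (lam r q x) ^ t * (int (c q x) - int (c' q x))) +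
              (\<Sum>q\<in>K. int (lam r q x) ^ t * (int (c q x) - int (c' q x)))"
          using K(1) unfolding P_def by (simp add: sum.subset_diff)
        moreover have "(\<Sum>q\<in>K. int (lam r q x) ^ t * (int (c q x) - int (c' q x))) = 0"
          using eq by simp
        ultimately show "int p dvd (\<Sum>q\<in>P. int (lam r q x) ^ t * (int (c q x) - int (c' q x)))"
          using code_dvd_diff[OF c c' _ t, of x] True by simp
      qed
      have "\<forall>q\<in>P. int p dvd (int (c q x) - int (c' q x))"
        using vand_unique[OF pi fP, of r "\<lambda>q. int (lam r q x)" "\<lambda>q. int (c q x) - int (c' q x)"]
          cP inj S by simp
      then have "int p dvd (int (c i x) - int (c' i x))" using True iK by (auto simp: P_def)
      moreover have "c i x < p" "c' i x < p" using c c' True arr_less by (auto simp: Code_def)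
      ultimately show ?thesis using dvd_diff_small[of "c i x" p "c' i x"] by simp
    qed
  qed
qed

lemma code_card:
  assumes p: "prime p" and r: "r > 0" "n * r \<le> p" "r = n - k" "k \<le> n"
  shows "card (Code p n r l) = p ^ (k * l)"
proof -
  define C where "C = Code p n r l"
  define T where "T = ({..<k} \<times> {..<l}) \<rightarrow>\<^sub>E {..<p}"
  define rho where "rho c = restrict (\<lambda>(i, x). c i x) ({..<k} \<times> {..<l})" for c :: "nat \<Rightarrow> nat \<Rightarrow> nat"
  have inj: "inj_on rho C"
  proof (rule inj_onI)
    fix c c' assume c: "c \<in> C" and c': "c' \<in> C" and e: "rho c = rho c'"
    have "\<forall>i\<in>{..<k}. c i = c' i"
    proof
      fix i assume i: "i \<in> {..<k}"
      show "c i = c' i"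
      proof
        fix x show "c i x = c' i x"
        proof (cases "x < l")
          case True
          then show ?thesis using fun_cong[OF e, of "(i, x)"] i by (simp add: rho_def)
        next
          case False
          have "c \<in> arr_space (Fp p) n l" "c' \<in> arr_space (Fp p) n l" using c c' by (auto simp: C_def Code_def)
          then show ?thesis using arr_zero[of _ p n l i x] False by metis
        qed
      qed
    qed
    then show "c = c'" using code_mds[OF p r, of "{..<k}" c l c'] c c' r(4) by (simp add: C_def)
  qed
  have sub: "rho ` C \<subseteq> T"
  proof
    fix y assume "y \<in> rho ` C"
    then obtain c where c: "c \<in> C" and y: "y = rho c" by blast
    have "c \<in> arr_space (Fp p) n l" using c by (simp add: C_def Code_def)
    then show "y \<in> T" using y r(4) by (auto simp: T_def rho_def arr_space_def)
  qed
  have sup: "T \<subseteq> rho ` C"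
  proof
    fix Y assume Y: "Y \<in> T"
    have "\<forall>x. \<exists>z. x < l \<longrightarrow> (\<forall>q\<in>{k..<n}. z q < p) \<and> (\<forall>t<r. int p dvd
        ((\<Sum>i<k. int (lam r i x) ^ t * int (Y (i, x))) + (\<Sum>q\<in>{k..<n}. int (lam r q x) ^ t * int (z q))))"
    proof
      fix x
      have inj: "\<forall>q\<in>{k..<n}. \<forall>q'\<in>{k..<n}. int p dvd (int (lam r q x) - int (lam r q' x)) \<longrightarrow> q = q'"
        using lam_dvd[OF r(1) _ _ r(2)] by auto
      show "\<exists>z. x < l \<longrightarrow> (\<forall>q\<in>{k..<n}. z q < p) \<and> (\<forall>t<r. int p dvd
        ((\<Sum>i<k. int (lam r i x) ^ t * int (Y (i, x))) + (\<Sum>q\<in>{k..<n}. int (lam r q x) ^ t * int (z q))))"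
      proof -
        have cQ: "card {k..<n} = r" using r(3) by simp
        from vand_exists[OF p finite_atLeastLessThan cQ inj, of "\<lambda>t. \<Sum>i<k. int (lam r i x) ^ t * int (Y (i, x))"]
        obtain z where "(\<forall>q\<in>{k..<n}. z q < p) \<and> (\<forall>t<r. int p dvd
          ((\<Sum>i<k. int (lam r i x) ^ t * int (Y (i, x))) + (\<Sum>q\<in>{k..<n}. int (lam r q x) ^ t * int (z q))))"
          by blast
        then show ?thesis by blast
      qed
    qed
    then have "\<exists>Z. \<forall>x. x < l \<longrightarrow> (\<forall>q\<in>{k..<n}. Z x q < p) \<and> (\<forall>t<r. int p dvd
        ((\<Sum>i<k. int (lam r i x) ^ t * int (Y (i, x))) + (\<Sum>q\<in>{k..<n}. int (lam r q x) ^ t * int (Z x q))))"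
      by (rule choice)
    then obtain Z where Z0: "\<forall>x. x < l \<longrightarrow> (\<forall>q\<in>{k..<n}. Z x q < p) \<and> (\<forall>t<r. int p dvd
        ((\<Sum>i<k. int (lam r i x) ^ t * int (Y (i, x))) + (\<Sum>q\<in>{k..<n}. int (lam r q x) ^ t * int (Z x q))))"
      by blast
    have Z: "\<And>x. x < l \<Longrightarrow> (\<forall>q\<in>{k..<n}. Z x q < p) \<and> (\<forall>t<r. int p dvd
        ((\<Sum>i<k. int (lam r i x) ^ t * int (Y (i, x))) + (\<Sum>q\<in>{k..<n}. int (lam r q x) ^ t * int (Z x q))))"
      using Z0 by blast
    define c where "c i x = (if x < l \<and> i < k then Y (i, x) else if x < l \<and> i < n then Z x i else 0)" for i x
    have Yl: "\<And>i x. i < k \<Longrightarrow> x < l \<Longrightarrow> Y (i, x) < p" using Y by (auto simp: T_def)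
    have p0: "p > 0" using p prime_gt_0_nat by blast
    have arr: "c \<in> arr_space (Fp p) n l"
      unfolding arr_space_def using Yl Z p0 r(4) by (auto simp: c_def)
    have par: "\<forall>x<l. \<forall>t<r. int p dvd (\<Sum>i<n. int (lam r i x) ^ t * int (c i x))"
    proof (intro allI impI)
      fix x t assume x: "x < l" and t: "t < r"
      have "{..<n} = {..<k} \<union> {k..<n}" using r(4) by auto
      then have "(\<Sum>i<n. int (lam r i x) ^ t * int (c i x)) =
         (\<Sum>i<k. int (lam r i x) ^ t * int (c i x)) + (\<Sum>i\<in>{k..<n}. int (lam r i x) ^ t * int (c i x))"
        by (metis (no_types, lifting) sum.union_disjoint finite_lessThan finite_atLeastLessThan ivl_disj_int_one(2))
      also have "\<dots> = (\<Sum>i<k. int (lam r i x) ^ t * int (Y (i, x))) + (\<Sum>q\<in>{k..<n}. int (lam r q x) ^ t * int (Z x q))"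
        using x by (simp add: c_def)
      finally show "int p dvd (\<Sum>i<n. int (lam r i x) ^ t * int (c i x))" using Z[OF x] t by simp
    qed
    have cC: "c \<in> C" using arr par by (simp add: C_def Code_def)
    have "rho c = Y"
    proof (rule PiE_ext)
      show "rho c \<in> ({..<k} \<times> {..<l}) \<rightarrow>\<^sub>E {..<p}" using sub cC by (auto simp: T_def)
      show "Y \<in> ({..<k} \<times> {..<l}) \<rightarrow>\<^sub>E {..<p}" using Y by (simp add: T_def)
      fix q assume "q \<in> {..<k} \<times> {..<l}"
      then show "rho c q = Y q" by (auto simp: rho_def c_def)
    qed
    then show "Y \<in> rho ` C" using cC by blast
  qed
  have "bij_betw rho C T" using inj sub sup by (auto simp: bij_betw_def)
  then have "card C = card T" by (rule bij_betw_same_card)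
  also have "\<dots> = p ^ (k * l)" by (simp add: T_def card_PiE prod_constant card_cartesian_product)
  finally show ?thesis by (simp add: C_def)
qed

definition bb :: "nat \<Rightarrow> nat \<Rightarrow> nat \<Rightarrow> nat" where "bb r n x = x div r ^ n"
definition ph :: "nat \<Rightarrow> nat \<Rightarrow> nat \<Rightarrow> nat \<Rightarrow> nat" where "ph r n i0 x = bb r n x * r + dig r i0 x"
definition wv :: "nat \<Rightarrow> nat \<Rightarrow> nat set \<Rightarrow> nat \<Rightarrow> nat \<Rightarrow> nat \<Rightarrow> nat" where
  "wv r n H i0 x = restrict (\<lambda>j. if j \<in> H then (dig r j x + r - dig r i0 x) mod r else dig r j x) {..<n}"

lemma mod_pow_eq: "(\<forall>j<m. dig r j x = dig r j y) \<Longrightarrow> x mod r ^ m = y mod r ^ m"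
proof (induction m)
  case 0 then show ?case by simp
next
  case (Suc m)
  have "x mod r ^ Suc m = r ^ m * (x div r ^ m mod r) + x mod r ^ m"
    by (metis mod_mult2_eq power_Suc2)
  moreover have "y mod r ^ Suc m = r ^ m * (y div r ^ m mod r) + y mod r ^ m"
    by (metis mod_mult2_eq power_Suc2)
  ultimately show ?case using Suc by (simp add: dig_def)
qed

lemma recon: "(\<forall>j<n. dig r j x = dig r j y) \<Longrightarrow> bb r n x = bb r n y \<Longrightarrow> x = y"
proof -
  assume a: "\<forall>j<n. dig r j x = dig r j y" and b: "bb r n x = bb r n y"
  have "x mod r ^ n = y mod r ^ n" using mod_pow_eq a by blast
  then show "x = y" using b unfolding bb_def by (metis div_mult_mod_eq)
qed

lemma nat_mod_dvd: "(x::nat) mod r = y mod r \<Longrightarrow> int r dvd (int x - int y)"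
proof -
  assume "x mod r = y mod r"
  then have "int (x mod r) = int (y mod r)" by simp
  then have "int x mod int r = int y mod int r" by (simp add: of_nat_mod)
  then show ?thesis by (simp add: mod_eq_dvd_iff)
qed

lemma small_dvd_zero: "(int r) dvd (X::int) \<Longrightarrow> \<bar>X\<bar> < int r \<Longrightarrow> X = 0"
proof (rule ccontr)
  assume "int r dvd X" "\<bar>X\<bar> < int r" "X \<noteq> 0"
  then have "\<bar>int r\<bar> \<le> \<bar>X\<bar>" using dvd_imp_le_int by blast
  then show False using \<open>\<bar>X\<bar> < int r\<close> by simp
qed

lemma modeq1:
  fixes a b d r :: nat
  assumes "a < r" "b < r" "d < r" "(a + r - d) mod r = (b + r - d) mod r"
  shows "a = b"
proof -
  have "int r dvd (int (a + r - d) - int (b + r - d))" using assms(4) by (rule nat_mod_dvd)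
  moreover have "int (a + r - d) - int (b + r - d) = int a - int b" using assms by simp
  moreover have "\<bar>int a - int b\<bar> < int r" using assms(1,2) by linarith
  ultimately have "int a - int b = 0" using small_dvd_zero[of r "int a - int b"] by simp
  then show ?thesis by simp
qed

lemma modeq2:
  fixes a d e r :: nat
  assumes "a < r" "d < r" "e < r" "(a + r - d) mod r = (a + r - e) mod r"
  shows "d = e"
proof -
  have "int r dvd (int (a + r - d) - int (a + r - e))" using assms(4) by (rule nat_mod_dvd)
  moreover have "int (a + r - d) - int (a + r - e) = int e - int d" using assms by simp
  moreover have "\<bar>int e - int d\<bar> < int r" using assms(2,3) by linarith
  ultimately have "int e - int d = 0" using small_dvd_zero[of r "int e - int d"] by simp
  then show ?thesis by simp
qed

lemma chunk:
  fixes A B s r :: nat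
  assumes "0 < s" "s \<le> r" "A div s = B div s" "A mod r = B mod r"
  shows "A = B"
proof -
  have "int r dvd (int A - int B)" using assms(4) by (rule nat_mod_dvd)
  moreover have "\<bar>int A - int B\<bar> < int s"
  proof -
    have "A = s * (A div s) + A mod s" "B = s * (B div s) + B mod s" by simp_all
    moreover have "A mod s < s" "B mod s < s" using assms(1) by simp_all
    ultimately have "int A = int s * int (A div s) + int (A mod s)" "int B = int s * int (A div s) + int (B mod s)"
      using assms(3) by (metis of_nat_add of_nat_mult)+
    then show ?thesis using \<open>A mod s < s\<close> \<open>B mod s < s\<close> by linarith
  qed
  moreover have "int s \<le> int r" using assms(2) by simp
  ultimately have "int A - int B = 0" using small_dvd_zero[of r "int A - int B"] by linarith
  then show ?thesis by simp
qed

lemma key_ph_inj: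
  assumes r: "r > 0" and i0: "i0 \<in> H" and H: "H \<subseteq> {..<n}"
    and w: "wv r n H i0 x = wv r n H i0 y" and e: "ph r n i0 x = ph r n i0 y"
  shows "x = y"
proof -
  have dl: "\<And>j z. dig r j z < r" using dig_less[OF r] .
  have "ph r n i0 x div r = bb r n x" "ph r n i0 y div r = bb r n y"
    using dl r by (simp_all add: ph_def)
  then have b: "bb r n x = bb r n y" using e by simp
  have "ph r n i0 x mod r = dig r i0 x" "ph r n i0 y mod r = dig r i0 y"
    using dl r by (simp_all add: ph_def)
  then have d0: "dig r i0 x = dig r i0 y" using e by simp
  have "\<forall>j<n. dig r j x = dig r j y"
  proof (intro allI impI)
    fix j assume j: "j < n"
    have wj: "wv r n H i0 x j = wv r n H i0 y j" using w by simp
    show "dig r j x = dig r j y"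
    proof (cases "j \<in> H")
      case True
      then have "(dig r j x + r - dig r i0 x) mod r = (dig r j y + r - dig r i0 x) mod r"
        using wj j d0 by (simp add: wv_def)
      then show ?thesis using modeq1 dl by blast
    next
      case False
      then show ?thesis using wj j by (simp add: wv_def)
    qed
  qed
  then show ?thesis using recon b by blast
qed

lemma key_dig_inj:
  assumes r: "r > 0" and i0: "i0 \<in> H" and H: "H \<subseteq> {..<n}" and s: "0 < s" "s \<le> r"
    and w: "wv r n H i0 x = wv r n H i0 y" and e: "ph r n i0 x div s = ph r n i0 y div s"
    and i: "i \<in> H" and di: "dig r i x = dig r i y"
  shows "x = y"
proof -
  have dl: "\<And>j z. dig r j z < r" using dig_less[OF r] .
  have "i < n" using i H by auto
  then have "(dig r i x + r - dig r i0 x) mod r = (dig r i x + r - dig r i0 y) mod r"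
    using fun_cong[OF w, of i] i di by (simp add: wv_def)
  then have d0: "dig r i0 x = dig r i0 y" using modeq2 dl by blast
  have "ph r n i0 x mod r = dig r i0 x" "ph r n i0 y mod r = dig r i0 y"
    using dl r by (simp_all add: ph_def)
  then have "ph r n i0 x = ph r n i0 y" using chunk[OF s e] d0 by simp
  then show ?thesis using key_ph_inj[OF r i0 H w] by blast
qed

lemma wv_in:
  assumes r: "r > 0" and i0: "i0 \<in> H"
  shows "wv r n H i0 x \<in> PiE {..<n} (\<lambda>j. if j = i0 then {0} else {..<r})"
proof -
  have "\<forall>j\<in>{..<n}. wv r n H i0 x j \<in> (if j = i0 then {0} else {..<r})"
    using r i0 dig_less[OF r] by (auto simp: wv_def)
  moreover have "wv r n H i0 x \<in> extensional {..<n}" by (simp add: wv_def)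
  ultimately show ?thesis by (simp add: PiE_iff)
qed

lemma card_W:
  assumes i0: "i0 < n"
  shows "card (PiE {..<n} (\<lambda>j. if j = i0 then {0} else {..<r})) = r ^ (n - 1)"
proof -
  have "card (PiE {..<n} (\<lambda>j. if j = i0 then {0} else {..<r})) =
        (\<Prod>j<n. card (if j = i0 then {0} else {..<r}))" by (simp add: card_PiE)
  also have "\<dots> = (\<Prod>j<n. if j = i0 then 1 else r)" by (rule prod.cong) auto
  also have "\<dots> = card (if i0 = i0 then {0::nat} else {..<r}) * (\<Prod>j\<in>{..<n} - {i0}. if j = i0 then 1 else r)"
    using i0 by (simp add: prod.remove)
  also have "\<dots> = (\<Prod>j\<in>{..<n} - {i0}. r)"
  proof -
    have "(\<Prod>j\<in>{..<n} - {i0}. if j = i0 then 1 else r) = (\<Prod>j\<in>{..<n} - {i0}. r)"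
      by (rule prod.cong) auto
    then show ?thesis by simp
  qed
  also have "\<dots> = r ^ (n - 1)" using i0 by simp
  finally show ?thesis .
qed

lemma ph_bound:
  assumes r: "r > 0" and x: "x < L * r ^ n"
  shows "ph r n i0 x < L * r"
proof -
  have "bb r n x < L" using x r by (simp add: bb_def div_less_iff_less_mult)
  then have "bb r n x + 1 \<le> L" by simp
  then have "(bb r n x + 1) * r \<le> L * r" by (rule mult_right_mono) simp
  moreover have "ph r n i0 x < (bb r n x + 1) * r" using dig_less[OF r, of i0 x] by (simp add: ph_def)
  ultimately show ?thesis by linarith
qed

lemma fiber_repair:
  assumes p: "prime p" and r: "r > 0" "n * r \<le> p"
    and c: "c \<in> Code p n r l" and c': "c' \<in> Code p n r l"
    and H: "H \<subseteq> {..<n}" and R: "R \<subseteq> {..<n} - H" and x: "x < l"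
    and Fb: "finite Fb" "x \<in> Fb" "Fb \<subseteq> {..<l}"
    and digeq: "\<forall>j<n. j \<notin> H \<longrightarrow> (\<forall>y\<in>Fb. dig r j y = dig r j x)"
    and injH: "\<forall>j\<in>H. \<forall>y\<in>Fb. \<forall>y'\<in>Fb. dig r j y = dig r j y' \<longrightarrow> y = y'"
    and cardP: "card H * card Fb + card ({..<n} - H - R) \<le> r"
    and helper: "\<forall>j\<in>R. int p dvd (\<Sum>y\<in>Fb. int (c j y) - int (c' j y))"
    and i: "i \<in> H"
  shows "c i x = c' i x"
proof -
  define U where "U = {..<n} - H - R"
  define e where "e j y = int (c j y) - int (c' j y)" for j y
  define mu where "mu q = int (lam r (fst q) (snd q))" for q
  define z where "z q = (if fst q \<in> H then e (fst q) (snd q) else (\<Sum>y\<in>Fb. e (fst q) y))" for q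
  define P where "P = H \<times> Fb \<union> U \<times> {x}"
  have finH: "finite H" using H finite_subset by blast
  have finU: "finite U" by (simp add: U_def)
  have finR: "finite R" using R finite_subset by blast
  have finP: "finite P" using finH Fb finU by (simp add: P_def)
  have HU: "H \<inter> U = {}" by (auto simp: U_def)
  have cP: "card P \<le> r"
  proof -
    have "card P = card (H \<times> Fb) + card (U \<times> {x})"
      unfolding P_def using finH Fb finU HU by (intro card_Un_disjoint) auto
    also have "\<dots> = card H * card Fb + card U" by (simp add: card_cartesian_product)
    finally show ?thesis using cardP by (simp add: U_def)
  qed
  have inj: "\<forall>q\<in>P. \<forall>q'\<in>P. int p dvd (mu q - mu q') \<longrightarrow> q = q'"
  proof (intro ballI impI)
    fix q q' assume q: "q \<in> P" and q': "q' \<in> P" and dv: "int p dvd (mu q - mu q')"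
    obtain j y where jy: "q = (j, y)" by fastforce
    obtain j' y' where jy': "q' = (j', y')" by fastforce
    have jn: "j < n" "j' < n" using q q' H jy jy' by (auto simp: P_def U_def)
    have "j = j' \<and> dig r j y = dig r j' y'"
      using lam_dvd[OF r(1) jn r(2)] dv jy jy' by (simp add: mu_def)
    then have jj: "j = j'" and dd: "dig r j y = dig r j y'" by auto
    show "q = q'"
    proof (cases "j \<in> H")
      case True
      then have "y \<in> Fb" "y' \<in> Fb" using q q' jy jy' jj HU by (auto simp: P_def)
      then have "y = y'" using injH True dd by blast
      then show ?thesis using jy jy' jj by simp
    next
      case False
      then have "y = x" "y' = x" using q q' jy jy' jj by (auto simp: P_def)
      then show ?thesis using jy jy' jj by simp
    qed
  qed
  have sums: "\<forall>t<r. int p dvd (\<Sum>q\<in>P. mu q ^ t * z q)"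
  proof (intro allI impI)
    fix t assume t: "t < r"
    define T where "T j = (\<Sum>y\<in>Fb. int (lam r j y) ^ t * e j y)" for j
    have A: "int p dvd (\<Sum>j<n. T j)"
    proof -
      have "(\<Sum>j<n. T j) = (\<Sum>y\<in>Fb. \<Sum>j<n. int (lam r j y) ^ t * e j y)"
        unfolding T_def by (rule sum.swap)
      moreover have "int p dvd (\<Sum>y\<in>Fb. \<Sum>j<n. int (lam r j y) ^ t * e j y)"
      proof (rule dvd_sum)
        fix y assume "y \<in> Fb"
        then have "y < l" using Fb by auto
        then show "int p dvd (\<Sum>j<n. int (lam r j y) ^ t * e j y)"
          using code_dvd_diff[OF c c' _ t] by (simp add: e_def)
      qed
      ultimately show ?thesis by simp
    qed
    have nonH: "T j = int (lam r j x) ^ t * (\<Sum>y\<in>Fb. e j y)" if j: "j < n" "j \<notin> H" for j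
    proof -
      have "T j = (\<Sum>y\<in>Fb. int (lam r j x) ^ t * e j y)"
        unfolding T_def using digeq j by (intro sum.cong) (auto simp: lam_def)
      then show ?thesis by (simp add: sum_distrib_left)
    qed
    have B: "int p dvd (\<Sum>j\<in>R. T j)"
    proof (rule dvd_sum)
      fix j assume j: "j \<in> R"
      then have "j < n" "j \<notin> H" using R by auto
      moreover have "int p dvd (\<Sum>y\<in>Fb. e j y)" using helper j by (simp add: e_def)
      ultimately show "int p dvd T j" using nonH by simp
    qed
    have split: "(\<Sum>j<n. T j) = (\<Sum>j\<in>H. T j) + (\<Sum>j\<in>R. T j) + (\<Sum>j\<in>U. T j)"
    proof -
      have "{..<n} = H \<union> (R \<union> U)" using H R by (auto simp: U_def)
      moreover have "(\<Sum>j\<in>H \<union> (R \<union> U). T j) = (\<Sum>j\<in>H. T j) + (\<Sum>j\<in>R \<union> U. T j)"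
        using finH finR finU R by (intro sum.union_disjoint) (auto simp: U_def)
      moreover have "(\<Sum>j\<in>R \<union> U. T j) = (\<Sum>j\<in>R. T j) + (\<Sum>j\<in>U. T j)"
        using finR finU by (intro sum.union_disjoint) (auto simp: U_def)
      ultimately show ?thesis by simp
    qed
    have C: "(\<Sum>j\<in>H. T j) = (\<Sum>q\<in>H \<times> Fb. mu q ^ t * z q)"
    proof -
      have "(\<Sum>j\<in>H. T j) = (\<Sum>(j, y)\<in>H \<times> Fb. int (lam r j y) ^ t * e j y)"
        unfolding T_def by (rule sum.cartesian_product)
      also have "\<dots> = (\<Sum>q\<in>H \<times> Fb. mu q ^ t * z q)"
        by (rule sum.cong) (auto simp: mu_def z_def)
      finally show ?thesis .
    qed
    have D: "(\<Sum>j\<in>U. T j) = (\<Sum>q\<in>U \<times> {x}. mu q ^ t * z q)"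
    proof -
      have "U \<times> {x} = (\<lambda>j. (j, x)) ` U" by auto
      moreover have "inj_on (\<lambda>j. (j, x)) U" by (auto simp: inj_on_def)
      ultimately have "(\<Sum>q\<in>U \<times> {x}. mu q ^ t * z q) = (\<Sum>j\<in>U. mu (j, x) ^ t * z (j, x))"
        by (simp add: sum.reindex)
      also have "\<dots> = (\<Sum>j\<in>U. T j)"
      proof (rule sum.cong)
        fix j assume "j \<in> U"
        then have "j < n" "j \<notin> H" by (auto simp: U_def)
        then show "mu (j, x) ^ t * z (j, x) = T j" using nonH by (simp add: mu_def z_def)
      qed simp
      finally show ?thesis by simp
    qed
    have E: "(\<Sum>q\<in>P. mu q ^ t * z q) = (\<Sum>q\<in>H \<times> Fb. mu q ^ t * z q) + (\<Sum>q\<in>U \<times> {x}. mu q ^ t * z q)"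
      unfolding P_def using finH Fb finU HU by (intro sum.union_disjoint) auto
    have "(\<Sum>q\<in>P. mu q ^ t * z q) = (\<Sum>j<n. T j) - (\<Sum>j\<in>R. T j)"
      using split C D E by simp
    then show "int p dvd (\<Sum>q\<in>P. mu q ^ t * z q)" using A B by simp
  qed
  have pi: "prime (int p)" using p by simp
  have "\<forall>q\<in>P. int p dvd z q"
    using vand_unique[OF pi finP, of r mu z] cP inj sums by blast
  moreover have "(i, x) \<in> P" using i Fb by (simp add: P_def)
  ultimately have "int p dvd (int (c i x) - int (c' i x))" using i by (force simp: z_def e_def)
  moreover have "c i x < p" "c' i x < p" using c c' i H x arr_less by (auto simp: Code_def)
  ultimately show ?thesis using dvd_diff_small[of "c i x" p "c' i x"] by simp
qed

lemma code_repair: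
  assumes p: "prime p" and r: "r > 0" "n * r \<le> p" "r = n - k" "k \<le> n"
    and l: "l = L * r ^ n" and s: "0 < s" "s \<le> r" "s dvd L"
    and h: "1 \<le> h" "h * s = d - k + h" "k \<le> d" "d \<le> n - h"
    and H: "H \<subseteq> {..<n}" "card H = h" and R: "R \<subseteq> {..<n} - H" "card R = d"
  shows "\<exists>f :: nat \<Rightarrow> (nat \<Rightarrow> nat) \<Rightarrow> nat \<Rightarrow> nat.
          (\<forall>j\<in>R. \<forall>c\<in>Code p n r l. \<forall>t < l div s. f j (c j) t \<in> carrier (Fp p)) \<and>
          (\<forall>c\<in>Code p n r l. \<forall>c'\<in>Code p n r l.
             (\<forall>j\<in>R. \<forall>t < l div s. f j (c j) t = f j (c' j) t) \<longrightarrow> (\<forall>i\<in>H. c i = c' i))"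
proof -
  have p0: "p > 0" using p prime_gt_0_nat by blast
  have finH: "finite H" using H finite_subset by blast
  have Hne: "H \<noteq> {}" using H h by auto
  define i0 where "i0 = Min H"
  have i0: "i0 \<in> H" using finH Hne by (simp add: i0_def)
  have i0n: "i0 < n" using i0 H by auto
  define key where "key x = (wv r n H i0 x, ph r n i0 x div s)" for x
  define m where "m = L * r div s"
  have sm: "s * m = L * r" using s(3) by (simp add: m_def)
  define W where "W = PiE {..<n} (\<lambda>j. if j = i0 then {0} else {..<r})"
  have finW: "finite W" by (simp add: W_def finite_PiE)
  have keyin: "key x \<in> W \<times> {..<m}" if x: "x < l" for x
  proof -
    have "wv r n H i0 x \<in> W" using wv_in[OF r(1) i0] by (simp add: W_def)
    moreover have "ph r n i0 x < m * s" using ph_bound[OF r(1), of x L n i0] x l sm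
      by (simp add: mult.commute)
    then have "ph r n i0 x div s < m" using s(1) by (simp add: div_less_iff_less_mult)
    ultimately show ?thesis by (simp add: key_def)
  qed
  have lm: "l div s = r ^ (n - 1) * m"
  proof -
    have "l = s * (m * r ^ (n - 1))"
    proof -
      have "r ^ n = r * r ^ (n - 1)" using i0n by (metis Suc_pred' gr_zeroI less_zeroE power_Suc)
      then have "l = (L * r) * r ^ (n - 1)" using l by simp
      also have "\<dots> = s * (m * r ^ (n - 1))" using sm by (simp add: mult.assoc)
      finally show ?thesis .
    qed
    then show ?thesis using s(1) by simp
  qed
  define KS where "KS = key ` {..<l}"
  have KSsub: "KS \<subseteq> W \<times> {..<m}" unfolding KS_def using keyin by blast
  have "card KS \<le> card (W \<times> {..<m})" using KSsub finW by (intro card_mono) auto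
  also have "\<dots> = l div s" using card_W[OF i0n, of r] lm by (simp add: W_def card_cartesian_product)
  finally have "card KS \<le> card {..<l div s}" by simp
  then obtain g where g: "g ` KS \<subseteq> {..<l div s}" "inj_on g KS"
    using card_le_inj[of KS "{..<l div s}"] by (auto simp: KS_def)
  define kap where "kap x = g (key x)" for x
  have kap_eq: "kap y = kap x \<longleftrightarrow> key y = key x" if "x < l" "y < l" for x y
    using g(2) that unfolding kap_def KS_def inj_on_def by auto
  have kap_lt: "kap x < l div s" if "x < l" for x using g(1) that by (auto simp: kap_def KS_def)
  define f where "f j v t = (\<Sum>y\<in>{y. y < l \<and> kap y = t}. v y) mod p" for j :: nat and v :: "nat \<Rightarrow> nat" and t
  show ?thesis
  proof (intro exI[of _ f] conjI ballI allI impI)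
    fix j c t show "f j (c j) t \<in> carrier (Fp p)" using p0 by (simp add: f_def)
  next
    fix c c' i
    assume c: "c \<in> Code p n r l" and c': "c' \<in> Code p n r l"
      and hyp: "\<forall>j\<in>R. \<forall>t<l div s. f j (c j) t = f j (c' j) t" and i: "i \<in> H"
    show "c i = c' i"
    proof
      fix x show "c i x = c' i x"
      proof (cases "x < l")
        case False
        have "c \<in> arr_space (Fp p) n l" "c' \<in> arr_space (Fp p) n l" using c c' by (auto simp: Code_def)
        then show ?thesis using arr_zero[of _ p n l i x] False by metis
      next
        case x: True
        define Fb where "Fb = {y. y < l \<and> key y = key x}"
        have Fbk: "{y. y < l \<and> kap y = kap x} = Fb" using kap_eq x by (auto simp: Fb_def)
        have finFb: "finite Fb" by (simp add: Fb_def)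
        have xFb: "x \<in> Fb" using x by (simp add: Fb_def)
        have FbL: "Fb \<subseteq> {..<l}" by (auto simp: Fb_def)
        have wvF: "wv r n H i0 y = wv r n H i0 x" and divF: "ph r n i0 y div s = ph r n i0 x div s"
          if "y \<in> Fb" for y using that by (auto simp: Fb_def key_def)
        have cardFb: "card Fb \<le> s"
        proof -
          define q where "q = ph r n i0 x div s"
          have "inj_on (ph r n i0) Fb"
          proof (rule inj_onI)
            fix y y' assume "y \<in> Fb" "y' \<in> Fb" "ph r n i0 y = ph r n i0 y'"
            moreover have "wv r n H i0 y = wv r n H i0 y'" using wvF \<open>y \<in> Fb\<close> \<open>y' \<in> Fb\<close> by simp
            ultimately show "y = y'" using key_ph_inj[OF r(1) i0 H(1)] by blast
          qed
          moreover have "ph r n i0 ` Fb \<subseteq> {q * s..<q * s + s}"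
          proof
            fix v assume "v \<in> ph r n i0 ` Fb"
            then obtain y where y: "y \<in> Fb" "v = ph r n i0 y" by blast
            then have "v div s = q" using divF q_def by simp
            moreover have "v = v div s * s + v mod s" by simp
            moreover have "v mod s < s" using s(1) by simp
            ultimately show "v \<in> {q * s..<q * s + s}" by (metis atLeastLessThan_iff add_less_cancel_left le_add1)
          qed
          ultimately have "card Fb \<le> card {q * s..<q * s + s}" by (intro card_inj_on_le) auto
          then show ?thesis by simp
        qed
        have digeq: "\<forall>j<n. j \<notin> H \<longrightarrow> (\<forall>y\<in>Fb. dig r j y = dig r j x)"
        proof (intro allI impI ballI)
          fix j y assume j: "j < n" "j \<notin> H" and y: "y \<in> Fb"
          show "dig r j y = dig r j x" using fun_cong[OF wvF[OF y], of j] j by (simp add: wv_def)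
        qed
        have injH: "\<forall>j\<in>H. \<forall>y\<in>Fb. \<forall>y'\<in>Fb. dig r j y = dig r j y' \<longrightarrow> y = y'"
        proof (intro ballI impI)
          fix j y y' assume j: "j \<in> H" and y: "y \<in> Fb" and y': "y' \<in> Fb" and d: "dig r j y = dig r j y'"
          have "wv r n H i0 y = wv r n H i0 y'" using wvF y y' by simp
          moreover have "ph r n i0 y div s = ph r n i0 y' div s" using divF y y' by simp
          ultimately show "y = y'" using key_dig_inj[OF r(1) i0 H(1) s(1,2) _ _ j d] by blast
        qed
        have cardP: "card H * card Fb + card ({..<n} - H - R) \<le> r"
        proof -
          have finR: "finite R" using R finite_subset by blast
          have "card (H \<union> R) = h + d" using finH finR R H by (subst card_Un_disjoint) auto
          moreover have "{..<n} - H - R = {..<n} - (H \<union> R)" by auto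
          moreover have "H \<union> R \<subseteq> {..<n}" using H R by auto
          moreover have "finite (H \<union> R)" using finH finR by simp
          ultimately have cU: "card ({..<n} - H - R) = n - (h + d)"
            using card_Diff_subset[of "H \<union> R" "{..<n}"] by simp
          have "card H * card Fb \<le> h * s" using cardFb H(2) by simp
          moreover have "h \<le> n" using H card_mono[of "{..<n}" H] by simp
          then have "h * s + (n - (h + d)) = r" using h(2,3,4) r(3) by arith
          ultimately show ?thesis using cU by linarith
        qed
        have helper: "\<forall>j\<in>R. int p dvd (\<Sum>y\<in>Fb. int (c j y) - int (c' j y))"
        proof
          fix j assume j: "j \<in> R"
          have "f j (c j) (kap x) = f j (c' j) (kap x)" using hyp j kap_lt[OF x] by blast
          then have "(\<Sum>y\<in>Fb. c j y) mod p = (\<Sum>y\<in>Fb. c' j y) mod p" using Fbk by (simp add: f_def)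
          then have "int p dvd (int (\<Sum>y\<in>Fb. c j y) - int (\<Sum>y\<in>Fb. c' j y))" by (rule nat_mod_dvd)
          then show "int p dvd (\<Sum>y\<in>Fb. int (c j y) - int (c' j y))" by (simp add: sum_subtractf)
        qed
        show ?thesis
          using fiber_repair[OF p r(1,2) c c' H(1) R(1) x finFb xFb FbL digeq injH cardP helper i] .
      qed
    qed
  qed
qed

theorem corollary1:
  fixes n k :: nat
  assumes "n > k" and "k \<ge> 1"
  shows "\<exists>(F :: nat ring) C. field F \<and> finite (carrier F) \<and>
           mds_array_code F n k (Lcm {1..n - k} * (n - k) ^ n) C \<and>
           (\<forall>h d. 1 \<le> h \<and> h \<le> n - k \<and> k \<le> d \<and> d \<le> n - h \<and> h dvd (d - k) \<longrightarrow>
              optimal_repair F n k (Lcm {1..n - k} * (n - k) ^ n) C h d)"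
proof -
  define r where "r = n - k"
  define L :: nat where "L = Lcm {1..r}"
  define l where "l = L * r ^ n"
  have r0: "r > 0" using assms by (simp add: r_def)
  obtain p :: nat where p: "prime p" "n * r < p" using bigger_prime by blast
  have pr: "n * r \<le> p" using p by simp
  have kn: "k \<le> n" using assms by simp
  have rr: "r = n - k" by (simp add: r_def)
  define C where "C = Code p n r l"
  have mds: "mds_array_code (Fp p) n k l C"
    unfolding mds_array_code_def
  proof (intro conjI allI impI ballI)
    show "linear_array_code (Fp p) n l C" using code_linear[OF p(1)] by (simp add: C_def)
    show "card C = card (carrier (Fp p)) ^ (k * l)" using code_card[OF p(1) r0 pr rr kn] by (simp add: C_def)
    fix K c c' assume K: "K \<subseteq> {..<n} \<and> card K = k" and c: "c \<in> C" and c': "c' \<in> C"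
      and e: "\<forall>i\<in>K. c i = c' i"
    show "c = c'" using code_mds[OF p(1) r0 pr rr kn _ _ _ _ e] K c c' by (simp add: C_def)
  qed
  have rep: "optimal_repair (Fp p) n k l C h d"
    if hd: "1 \<le> h" "h \<le> n - k" "k \<le> d" "d \<le> n - h" "h dvd (d - k)" for h d
  proof -
    define s where "s = (d - k) div h + 1"
    have hs: "h * s = d - k + h" using hd(5) by (simp add: s_def distrib_left)
    have s0: "0 < s" by (simp add: s_def)
    have "s \<le> h * s" using hd(1) by simp
    also have "h * s \<le> r" using hs hd unfolding r_def by linarith
    finally have sr: "s \<le> r" .
    have sL: "s dvd L" unfolding L_def using s0 sr by (intro dvd_Lcm) auto
    have beta: "(h * l) div (d - k + h) = l div s"
      using hs hd(1) by (metis div_mult_mult1 not_one_le_zero neq0_conv)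
    show ?thesis
      unfolding optimal_repair_def beta
    proof (intro allI impI)
      fix H R assume HR: "H \<subseteq> {..<n} \<and> card H = h \<and> R \<subseteq> {..<n} - H \<and> card R = d"
      show "\<exists>f :: nat \<Rightarrow> (nat \<Rightarrow> nat) \<Rightarrow> nat \<Rightarrow> nat.
          (\<forall>j\<in>R. \<forall>c\<in>C. \<forall>t < l div s. f j (c j) t \<in> carrier (Fp p)) \<and>
          (\<forall>c\<in>C. \<forall>c'\<in>C.
             (\<forall>j\<in>R. \<forall>t < l div s. f j (c j) t = f j (c' j) t) \<longrightarrow> (\<forall>i\<in>H. c i = c' i))"
        unfolding C_def
        using code_repair[OF p(1) r0 pr rr kn l_def s0 sr sL hd(1) hs hd(3) hd(4)] HR by blast
    qed
  qed
  show ?thesis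
  proof (intro exI conjI)
    show "field (Fp p)" using Fp_field[OF p(1)] .
    show "finite (carrier (Fp p))" by simp
    show "mds_array_code (Fp p) n k (Lcm {1..n - k} * (n - k) ^ n) C"
      using mds by (simp add: l_def L_def r_def)
    show "\<forall>h d. 1 \<le> h \<and> h \<le> n - k \<and> k \<le> d \<and> d \<le> n - h \<and> h dvd (d - k) \<longrightarrow>
              optimal_repair (Fp p) n k (Lcm {1..n - k} * (n - k) ^ n) C h d"
      using rep by (simp add: l_def L_def r_def)
  qed
qed

end
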